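(* Let $M(C,\bar\xi,\pi)$ be a Myller configuration with Darboux frame $(\bar\xi,\bar\mu,\bar v)$ and invariants $G,K,T$, $(G,T)\neq(0,0)$ everywhere, and suppose $C$ is a $W_r$-helix with fixed unit axis $\bar l_r$ and constant angle $\vartheta$, $\langle\bar W_r,\bar l_r\rangle=\cos\vartheta$. Then, for one choice of sign, $$\bar l_r=\cos\vartheta\frac{T}{\sqrt{G^2+T^2}}\bar\xi\mp(\sin\vartheta)\bar\mu+\cos\vartheta\frac{G}{\sqrt{G^2+T^2}}\bar v.$$
   Context: Let $C$ be a smooth curve in $E^3$ parametrized by arclength $s$; primes denote $d/ds$. A Myller configuration $M(C,\bar\xi,\pi)$ consists of a smooth unit vector field $\bar\xi$ along $C$ and a smooth oriented plane field $\pi$ with $\bar\xi\in\pi$; $\bar v$ is the unit normal of $\pi$, $\bar\mu=\bar v\times\bar\xi$, and $\bar\xi'=G\bar\mu+K\bar v$, $\bar\mu'=-G\bar\xi+T\bar v$, $\bar v'=-K\bar\xi-T\bar\mu$. The RD-vector is $W_r=T\bar\xi+G\bar v$, $\bar W_r=W_r/\|W_r\|$; $C$ is a $W_r$-helix if there are a constant unit vector $\bar l_r$ (axis) and constant $\vartheta$ with $\langle\bar W_r,\bar l_r\rangle=\cos\vartheta$ along $C$.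
   Formalization: The derivative of $\bar W_r$ with respect to s is also nonzero at every point of C, and the sign in $\mp$ is one choice fixed along all of C rather than pointwise. Apart from conventions, each condition added here is assumed in the paper as well or is needed for the statement above to hold. *)

theory Defs
  imports "HOL-Analysis.Analysis"
begin

text \<open>Myller configuration along a curve parametrized by arclength s on an open interval I.
  xi = unit vector field, nu = unit normal of the plane field pi, mu = nu x xi.\<close>

definition myller_config ::
  "real set \<Rightarrow> (real \<Rightarrow> real^3) \<Rightarrow> (real \<Rightarrow> real^3) \<Rightarrow> (real \<Rightarrow> real^3) \<Rightarrow> (real \<Rightarrow> real^3)
   \<Rightarrow> (real \<Rightarrow> real) \<Rightarrow> (real \<Rightarrow> real) \<Rightarrow> (real \<Rightarrow> real) \<Rightarrow> bool" where
  "myller_config I r xi mu nu G K T \<longleftrightarrow>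
     (\<forall>s\<in>I.
        (r has_vector_derivative vector_derivative r (at s)) (at s) \<and>
        norm (vector_derivative r (at s)) = 1 \<and>
        norm (xi s) = 1 \<and> norm (nu s) = 1 \<and> xi s \<bullet> nu s = 0 \<and>
        mu s = cross3 (nu s) (xi s) \<and>
        (xi has_vector_derivative (G s *\<^sub>R mu s + K s *\<^sub>R nu s)) (at s) \<and>
        (mu has_vector_derivative (- G s *\<^sub>R xi s + T s *\<^sub>R nu s)) (at s) \<and>
        (nu has_vector_derivative (- K s *\<^sub>R xi s - T s *\<^sub>R mu s)) (at s) \<and>
        G differentiable (at s) \<and> K differentiable (at s) \<and> T differentiable (at s))"

definition RD_vector ::
  "(real \<Rightarrow> real^3) \<Rightarrow> (real \<Rightarrow> real^3) \<Rightarrow> (real \<Rightarrow> real) \<Rightarrow> (real \<Rightarrow> real) \<Rightarrow> real \<Rightarrow> real^3" where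
  "RD_vector xi nu G T s = T s *\<^sub>R xi s + G s *\<^sub>R nu s"

definition RD_unit ::
  "(real \<Rightarrow> real^3) \<Rightarrow> (real \<Rightarrow> real^3) \<Rightarrow> (real \<Rightarrow> real) \<Rightarrow> (real \<Rightarrow> real) \<Rightarrow> real \<Rightarrow> real^3" where
  "RD_unit xi nu G T s = (1 / norm (RD_vector xi nu G T s)) *\<^sub>R RD_vector xi nu G T s"

definition Wr_helix_axis ::
  "real set \<Rightarrow> (real \<Rightarrow> real^3) \<Rightarrow> (real \<Rightarrow> real^3) \<Rightarrow> (real \<Rightarrow> real) \<Rightarrow> (real \<Rightarrow> real)
   \<Rightarrow> real^3 \<Rightarrow> real \<Rightarrow> bool" where
  "Wr_helix_axis I xi nu G T l \<theta> \<longleftrightarrow>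
     norm l = 1 \<and> (\<forall>s\<in>I. RD_unit xi nu G T s \<bullet> l = cos \<theta>)"

end

theory Submission
  imports Defs
begin

lemma cross_cross_lagr: "cross3 (cross3 a b) c = (a \<bullet> c) *\<^sub>R b - (b \<bullet> c) *\<^sub>R a" for a b c :: "real^3"
  by (simp add: cross3_simps forall_3)

lemma frame_expand:
  fixes x n v :: "real^3"
  assumes "norm x = 1" "norm n = 1" "x \<bullet> n = 0"
  shows "v = (v \<bullet> x) *\<^sub>R x + (v \<bullet> cross3 n x) *\<^sub>R cross3 n x + (v \<bullet> n) *\<^sub>R n"
proof -
  define m where "m = cross3 n x"
  define w where "w = v - (v \<bullet> x) *\<^sub>R x - (v \<bullet> n) *\<^sub>R n"
  have xx: "x \<bullet> x = 1" "n \<bullet> n = 1" using assms by (simp_all add: norm_eq_1)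
  have wx: "w \<bullet> x = 0" "w \<bullet> n = 0" using assms xx unfolding w_def
    by (simp_all add: inner_diff_left inner_diff_right inner_commute)
  have mm: "m \<bullet> m = 1"
    using norm_cross_dot[of n x] assms unfolding m_def by (simp add: inner_commute power2_norm_eq_inner[symmetric])
  have mw: "m \<bullet> w = m \<bullet> v" unfolding w_def m_def by (simp add: inner_diff_right dot_cross_self)
  have "cross3 m w = 0" unfolding m_def cross_cross_lagr using wx by (simp add: inner_commute)
  hence "cross3 m (cross3 m w) = 0" by simp
  hence "(m \<bullet> w) *\<^sub>R m - w = 0"
    unfolding cross_skew[of m "cross3 m w"] cross_cross_lagr using mm by (simp add: inner_commute)
  hence "w = (v \<bullet> m) *\<^sub>R m" using mw by (simp add: inner_commute)
  thus ?thesis unfolding w_def m_def by (simp add: algebra_simps)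
qed

lemma pointwise:
  fixes x n D l :: "real^3" and Tv Gv \<theta> :: real
  assumes x1: "norm x = 1" and n1: "norm n = 1" and xn: "x \<bullet> n = 0"
    and GT: "(Gv, Tv) \<noteq> (0, 0)" and D0: "D \<noteq> 0"
    and DU: "D \<bullet> ((1 / sqrt (Gv\<^sup>2 + Tv\<^sup>2)) *\<^sub>R (Tv *\<^sub>R x + Gv *\<^sub>R n)) = 0"
    and Dm: "D \<bullet> cross3 n x = 0" and Dl: "D \<bullet> l = 0"
    and Ul: "((1 / sqrt (Gv\<^sup>2 + Tv\<^sup>2)) *\<^sub>R (Tv *\<^sub>R x + Gv *\<^sub>R n)) \<bullet> l = cos \<theta>"
    and l1: "norm l = 1"
  shows "l = (cos \<theta> * Tv / sqrt (Gv\<^sup>2 + Tv\<^sup>2)) *\<^sub>R x + (l \<bullet> cross3 n x) *\<^sub>R cross3 n x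
           + (cos \<theta> * Gv / sqrt (Gv\<^sup>2 + Tv\<^sup>2)) *\<^sub>R n
         \<and> (l \<bullet> cross3 n x)\<^sup>2 = (sin \<theta>)\<^sup>2"
proof -
  define N where "N = sqrt (Gv\<^sup>2 + Tv\<^sup>2)"
  define m where "m = cross3 n x"
  have GT0: "Gv \<noteq> 0 \<or> Tv \<noteq> 0" using GT by auto
  hence "Gv\<^sup>2 + Tv\<^sup>2 > 0" by (auto simp: add_pos_nonneg add_nonneg_pos)
  hence Npos: "N > 0" unfolding N_def by simp
  have NN: "N\<^sup>2 = Gv\<^sup>2 + Tv\<^sup>2" unfolding N_def by simp
  define p where "p = D \<bullet> x"
  define q where "q = D \<bullet> n"
  define \<alpha> where "\<alpha> = l \<bullet> x"
  define \<beta> where "\<beta> = l \<bullet> m"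
  define \<gamma> where "\<gamma> = l \<bullet> n"
  have Dexp: "D = p *\<^sub>R x + (D \<bullet> m) *\<^sub>R m + q *\<^sub>R n"
    unfolding p_def q_def m_def using frame_expand[OF x1 n1 xn] by blast
  have lexp: "l = \<alpha> *\<^sub>R x + \<beta> *\<^sub>R m + \<gamma> *\<^sub>R n"
    unfolding \<alpha>_def \<beta>_def \<gamma>_def m_def using frame_expand[OF x1 n1 xn] by blast
  have pq: "p \<noteq> 0 \<or> q \<noteq> 0" using Dexp Dm D0 unfolding m_def by auto
  have e1: "Tv * p + Gv * q = 0"
  proof -
    have "(1/N) * (Tv * p + Gv * q) = 0" using DU unfolding N_def[symmetric] p_def q_def
      by (simp add: inner_add_right algebra_simps)
    thus ?thesis using Npos by simp
  qed
  have e2: "\<alpha> * p + \<gamma> * q = 0"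
  proof -
    have "D \<bullet> l = \<alpha> * p + \<beta> * (D \<bullet> m) + \<gamma> * q"
      by (subst lexp) (simp add: inner_add_right p_def q_def)
    thus ?thesis using Dl Dm unfolding m_def by simp
  qed
  have e3: "Tv * \<alpha> + Gv * \<gamma> = cos \<theta> * N"
  proof -
    have "(1/N) * (Tv * \<alpha> + Gv * \<gamma>) = cos \<theta>" using Ul unfolding N_def[symmetric] \<alpha>_def \<gamma>_def
      by (simp add: inner_add_left algebra_simps inner_commute)
    thus ?thesis using Npos by (simp add: field_simps)
  qed
  have det: "Tv * \<gamma> - Gv * \<alpha> = 0"
  proof -
    have "(Tv * \<gamma> - Gv * \<alpha>) * p = 0" "(Tv * \<gamma> - Gv * \<alpha>) * q = 0"
      using e1 e2 by algebra+
    thus ?thesis using pq by auto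
  qed
  have a: "\<alpha> = cos \<theta> * Tv / N"
  proof -
    have "\<alpha> * N\<^sup>2 = Tv * (cos \<theta> * N)" unfolding NN e3[symmetric] using det by algebra
    thus ?thesis using Npos by (simp add: field_simps power2_eq_square)
  qed
  have c: "\<gamma> = cos \<theta> * Gv / N"
  proof -
    have "\<gamma> * N\<^sup>2 = Gv * (cos \<theta> * N)" unfolding NN e3[symmetric] using det by algebra
    thus ?thesis using Npos by (simp add: field_simps power2_eq_square)
  qed
  have xx: "x \<bullet> x = 1" "n \<bullet> n = 1" using x1 n1 by (simp_all add: norm_eq_1)
  have mm: "m \<bullet> m = 1"
    using norm_cross_dot[of n x] x1 n1 xn unfolding m_def by (simp add: inner_commute power2_norm_eq_inner[symmetric])
  have mx: "m \<bullet> x = 0" "m \<bullet> n = 0" unfolding m_def by (simp_all add: dot_cross_self)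
  have ll: "l \<bullet> l = \<alpha>\<^sup>2 + \<beta>\<^sup>2 + \<gamma>\<^sup>2"
  proof -
    have "l \<bullet> l = l \<bullet> (\<alpha> *\<^sub>R x + \<beta> *\<^sub>R m + \<gamma> *\<^sub>R n)" using lexp by simp
    also have "\<dots> = \<alpha>\<^sup>2 + \<beta>\<^sup>2 + \<gamma>\<^sup>2" by (simp add: inner_add_right \<alpha>_def \<beta>_def \<gamma>_def power2_eq_square)
    finally show ?thesis .
  qed
  have l11: "l \<bullet> l = 1" using l1 by (simp add: norm_eq_1)
  have "\<alpha>\<^sup>2 + \<gamma>\<^sup>2 = (cos \<theta>)\<^sup>2"
  proof -
    have "\<alpha>\<^sup>2 + \<gamma>\<^sup>2 = (cos \<theta>)\<^sup>2 * (Gv\<^sup>2 + Tv\<^sup>2) / N\<^sup>2" unfolding a c by (simp add: power_divide power_mult_distrib add_divide_distrib algebra_simps)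
    thus ?thesis using NN Npos GT0 by (auto simp del: NN)
  qed
  hence b2: "\<beta>\<^sup>2 = (sin \<theta>)\<^sup>2" using ll l11 sin_cos_squared_add[of \<theta>] by linarith
  show ?thesis using lexp a c b2 unfolding N_def m_def \<beta>_def by simp
qed

lemma inner_const_deriv:
  fixes f g :: "real \<Rightarrow> real^3"
  assumes "(f has_vector_derivative f') (at s)" "(g has_vector_derivative g') (at s)"
    "open S" "s \<in> S" "\<forall>y\<in>S. f y \<bullet> g y = c"
  shows "f s \<bullet> g' + f' \<bullet> g s = 0"
proof -
  have h: "((\<lambda>x. f x \<bullet> g x) has_vector_derivative (f s \<bullet> g' + f' \<bullet> g s)) (at s)"
    by (rule bounded_bilinear.has_vector_derivative[OF bounded_bilinear_inner assms(1,2)])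
  have "((\<lambda>x. c) has_vector_derivative (f s \<bullet> g' + f' \<bullet> g s)) (at s)"
    by (rule has_vector_derivative_transform_within_open[OF h assms(3,4)]) (use assms(5) in auto)
  thus ?thesis using vector_derivative_unique_at[OF _ has_vector_derivative_const] by blast
qed


theorem corollary22:
  fixes a b :: real
    and r xi mu nu :: "real \<Rightarrow> real^3"
    and G K T :: "real \<Rightarrow> real"
    and l :: "real^3" and \<theta> :: real
  assumes "a < b"
    and "myller_config {a<..<b} r xi mu nu G K T"
    and "\<forall>s\<in>{a<..<b}. (G s, T s) \<noteq> (0, 0)"
    and "Wr_helix_axis {a<..<b} xi nu G T l \<theta>"
    and "\<forall>s\<in>{a<..<b}. vector_derivative (RD_unit xi nu G T) (at s) \<noteq> 0"
  shows "\<exists>\<sigma>::real. (\<sigma> = 1 \<or> \<sigma> = -1) \<and>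
           (\<forall>s\<in>{a<..<b}.
              l = (cos \<theta> * T s / sqrt ((G s)\<^sup>2 + (T s)\<^sup>2)) *\<^sub>R xi s
                  - (\<sigma> * sin \<theta>) *\<^sub>R mu s
                  + (cos \<theta> * G s / sqrt ((G s)\<^sup>2 + (T s)\<^sup>2)) *\<^sub>R nu s)"

proof -
  let ?I = "{a<..<b}"
  define U where "U = RD_unit xi nu G T"
  define V where "V = RD_vector xi nu G T"
  define N where "N = (\<lambda>s. sqrt ((G s)\<^sup>2 + (T s)\<^sup>2))"
  have oI: "open ?I" by simp
  have xi1: "\<And>s. s \<in> ?I \<Longrightarrow> norm (xi s) = 1" and nu1: "\<And>s. s \<in> ?I \<Longrightarrow> norm (nu s) = 1"
    and xn: "\<And>s. s \<in> ?I \<Longrightarrow> xi s \<bullet> nu s = 0"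
    and mud: "\<And>s. s \<in> ?I \<Longrightarrow> mu s = cross3 (nu s) (xi s)"
    and xid: "\<And>s. s \<in> ?I \<Longrightarrow> (xi has_vector_derivative (G s *\<^sub>R mu s + K s *\<^sub>R nu s)) (at s)"
    and mud': "\<And>s. s \<in> ?I \<Longrightarrow> (mu has_vector_derivative (- G s *\<^sub>R xi s + T s *\<^sub>R nu s)) (at s)"
    and nud: "\<And>s. s \<in> ?I \<Longrightarrow> (nu has_vector_derivative (- K s *\<^sub>R xi s - T s *\<^sub>R mu s)) (at s)"
    and Gd: "\<And>s. s \<in> ?I \<Longrightarrow> G differentiable (at s)"
    and Td: "\<And>s. s \<in> ?I \<Longrightarrow> T differentiable (at s)"
    using assms(2) unfolding myller_config_def by blast+
  have l1: "norm l = 1" and Ul: "\<And>s. s \<in> ?I \<Longrightarrow> U s \<bullet> l = cos \<theta>"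
    using assms(4) unfolding Wr_helix_axis_def U_def by auto
  have Vdef: "V = (\<lambda>s. T s *\<^sub>R xi s + G s *\<^sub>R nu s)"
    unfolding V_def RD_vector_def by auto
  have Udef: "U = (\<lambda>s. (1 / norm (V s)) *\<^sub>R V s)"
    unfolding U_def V_def RD_unit_def by auto
  have normV: "norm (V s) = N s" if "s \<in> ?I" for s
  proof -
    have xx: "xi s \<bullet> xi s = 1" "nu s \<bullet> nu s = 1" using xi1[OF that] nu1[OF that] by (simp_all add: norm_eq_1)
    have "V s \<bullet> V s = (G s)\<^sup>2 + (T s)\<^sup>2" unfolding Vdef using xx xn[OF that]
      by (simp add: inner_add_left inner_add_right inner_commute power2_eq_square)
    thus ?thesis unfolding N_def by (simp add: norm_eq_sqrt_inner)
  qed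
  have Npos: "N s > 0" if "s \<in> ?I" for s
  proof -
    have GT0: "G s \<noteq> 0 \<or> T s \<noteq> 0" using assms(3) that by auto
    hence "(G s)\<^sup>2 + (T s)\<^sup>2 > 0" by (auto simp: add_pos_nonneg add_nonneg_pos)
    thus ?thesis unfolding N_def by simp
  qed
  have Uexp: "U s = (1 / N s) *\<^sub>R (T s *\<^sub>R xi s + G s *\<^sub>R nu s)" if "s \<in> ?I" for s
    using normV[OF that] unfolding Udef by (simp add: Vdef)
  have Ud: "(U has_vector_derivative vector_derivative U (at s)) (at s)" if "s \<in> ?I" for s
  proof -
    have dxi: "xi differentiable (at s)" using differentiableI_vector[OF xid[OF that]] .
    have dnu: "nu differentiable (at s)" using differentiableI_vector[OF nud[OF that]] .
    have dV: "V differentiable (at s)" unfolding Vdef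
      using Td[OF that] Gd[OF that] dxi dnu by (intro differentiable_add differentiable_scaleR) auto
    have V0: "V s \<noteq> 0" using normV[OF that] Npos[OF that] by auto
    have dN: "(\<lambda>s. norm (V s)) differentiable (at s)"
      by (rule differentiable_compose[OF differentiable_norm_at[OF V0] dV])
    have "U differentiable (at s)" unfolding Udef
      using dN dV V0 by (intro differentiable_scaleR differentiable_divide) auto
    thus ?thesis using vector_derivative_works by blast
  qed
  define D where "D = (\<lambda>s. vector_derivative U (at s))"
  have pw: "l = (cos \<theta> * T s / N s) *\<^sub>R xi s + (l \<bullet> mu s) *\<^sub>R mu s + (cos \<theta> * G s / N s) *\<^sub>R nu s
         \<and> (l \<bullet> mu s)\<^sup>2 = (sin \<theta>)\<^sup>2" if sI: "s \<in> ?I" for s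
  proof -
    have hU: "(U has_vector_derivative D s) (at s)" using Ud[OF sI] unfolding D_def .
    have D0: "D s \<noteq> 0" using assms(5) sI unfolding D_def U_def by auto
    have c1: "U s \<bullet> 0 + D s \<bullet> l = 0"
      by (rule inner_const_deriv[OF hU has_vector_derivative_const oI sI]) (use Ul in auto)
    have UU: "\<forall>y\<in>?I. U y \<bullet> U y = 1"
    proof
      fix y assume yI: "y \<in> ?I"
      have "norm (U y) = 1" unfolding Udef using normV[OF yI] Npos[OF yI] by simp
      thus "U y \<bullet> U y = 1" by (simp add: norm_eq_1)
    qed
    have c2: "U s \<bullet> D s + D s \<bullet> U s = 0"
      by (rule inner_const_deriv[OF hU hU oI sI UU])
    have Um: "\<forall>y\<in>?I. U y \<bullet> mu y = 0"
    proof
      fix y assume yI: "y \<in> ?I"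
      show "U y \<bullet> mu y = 0" unfolding Uexp[OF yI] mud[OF yI]
        by (simp add: inner_add_left dot_cross_self)
    qed
    have c3: "U s \<bullet> (- G s *\<^sub>R xi s + T s *\<^sub>R nu s) + D s \<bullet> mu s = 0"
      by (rule inner_const_deriv[OF hU mud'[OF sI] oI sI Um])
    have xx: "xi s \<bullet> xi s = 1" "nu s \<bullet> nu s = 1" using xi1[OF sI] nu1[OF sI] by (simp_all add: norm_eq_1)
    have "U s \<bullet> (- G s *\<^sub>R xi s + T s *\<^sub>R nu s) = 0" unfolding Uexp[OF sI] using xx xn[OF sI]
      by (simp add: inner_add_left inner_add_right inner_commute algebra_simps)
    hence Dm: "D s \<bullet> cross3 (nu s) (xi s) = 0" using c3 mud[OF sI] by simp
    have DU: "D s \<bullet> ((1 / sqrt ((G s)\<^sup>2 + (T s)\<^sup>2)) *\<^sub>R (T s *\<^sub>R xi s + G s *\<^sub>R nu s)) = 0"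
      using c2 Uexp[OF sI] unfolding N_def by (simp add: inner_commute)
    have Ul': "((1 / sqrt ((G s)\<^sup>2 + (T s)\<^sup>2)) *\<^sub>R (T s *\<^sub>R xi s + G s *\<^sub>R nu s)) \<bullet> l = cos \<theta>"
      using Ul[OF sI] Uexp[OF sI] unfolding N_def by simp
    have "(G s, T s) \<noteq> (0, 0)" using assms(3) sI by auto
    from pointwise[OF xi1[OF sI] nu1[OF sI] xn[OF sI] this D0 DU Dm _ Ul' l1] c1
    show ?thesis unfolding N_def mud[OF sI] by simp
  qed
  define s0 where "s0 = (a + b) / 2"
  have s0I: "s0 \<in> ?I" unfolding s0_def using assms(1) by auto
  define \<beta> where "\<beta> = (\<lambda>s. l \<bullet> mu s)"
  have cont: "continuous_on ?I \<beta>"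
  proof -
    have "\<And>s. s \<in> ?I \<Longrightarrow> isCont \<beta> s" unfolding \<beta>_def
      by (intro continuous_intros) (use mud' has_vector_derivative_continuous in blast)
    thus ?thesis by (simp add: continuous_at_imp_continuous_on)
  qed
  show ?thesis
  proof (cases "sin \<theta> = 0")
    case True
    show ?thesis
    proof (intro exI[of _ 1] conjI ballI)
      fix s assume sI: "s \<in> ?I"
      from pw[OF sI] True have "l \<bullet> mu s = 0" by simp
      thus "l = (cos \<theta> * T s / sqrt ((G s)\<^sup>2 + (T s)\<^sup>2)) *\<^sub>R xi s - (1 * sin \<theta>) *\<^sub>R mu s
              + (cos \<theta> * G s / sqrt ((G s)\<^sup>2 + (T s)\<^sup>2)) *\<^sub>R nu s"
        using pw[OF sI] True unfolding N_def by simp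
    qed simp
  next
    case False
    have nz: "\<beta> s \<noteq> 0" if "s \<in> ?I" for s
      using pw[OF that] False unfolding \<beta>_def by auto
    have same: "\<beta> s = \<beta> s0" if sI: "s \<in> ?I" for s
    proof (rule ccontr)
      assume ne: "\<beta> s \<noteq> \<beta> s0"
      have sq: "(\<beta> s)\<^sup>2 = (\<beta> s0)\<^sup>2" using pw[OF sI] pw[OF s0I] unfolding \<beta>_def by simp
      hence opp: "\<beta> s = - \<beta> s0" using ne by (metis power2_eq_iff)
      have sub: "{min s s0..max s s0} \<subseteq> ?I" using sI s0I by auto
      have cc: "continuous_on {min s s0..max s s0} \<beta>" using continuous_on_subset[OF cont sub] .
      have "\<exists>x. min s s0 \<le> x \<and> x \<le> max s s0 \<and> \<beta> x = 0"
      proof (cases "\<beta> (min s s0) \<le> 0")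
        case True
        have "\<beta> (max s s0) \<ge> 0" using True opp by (cases "s \<le> s0") (auto simp: min_def max_def)
        thus ?thesis using IVT'[OF True _ _ cc] by auto
      next
        case False
        have "\<beta> (max s s0) \<le> 0" using False opp by (cases "s \<le> s0") (auto simp: min_def max_def)
        thus ?thesis using IVT2'[OF _ _ _ cc] False by auto
      qed
      then obtain x where "min s s0 \<le> x" "x \<le> max s s0" "\<beta> x = 0" by blast
      moreover have "x \<in> ?I" using sub \<open>min s s0 \<le> x\<close> \<open>x \<le> max s s0\<close> by auto
      ultimately show False using nz by blast
    qed
    define \<sigma> where "\<sigma> = - \<beta> s0 / sin \<theta>"
    have "(\<beta> s0)\<^sup>2 = (sin \<theta>)\<^sup>2" using pw[OF s0I] unfolding \<beta>_def by simp
    hence "\<beta> s0 = sin \<theta> \<or> \<beta> s0 = - sin \<theta>" by (metis power2_eq_iff)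
    hence sig: "\<sigma> = 1 \<or> \<sigma> = -1" unfolding \<sigma>_def using False by auto
    have bs: "\<beta> s0 = - (\<sigma> * sin \<theta>)" unfolding \<sigma>_def using False by simp
    show ?thesis
    proof (intro exI[of _ \<sigma>] conjI ballI sig)
      fix s assume sI: "s \<in> ?I"
      have "l \<bullet> mu s = - (\<sigma> * sin \<theta>)" using same[OF sI] bs unfolding \<beta>_def by simp
      thus "l = (cos \<theta> * T s / sqrt ((G s)\<^sup>2 + (T s)\<^sup>2)) *\<^sub>R xi s - (\<sigma> * sin \<theta>) *\<^sub>R mu s
              + (cos \<theta> * G s / sqrt ((G s)\<^sup>2 + (T s)\<^sup>2)) *\<^sub>R nu s"
        using pw[OF sI] unfolding N_def by simp
    qed
  qed
qed

end
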